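(* Let $n$ be a positive integer. Then in the ring $\mathbb{Z}[x,q]$ (polynomials in $x$ whose coefficients are polynomials in $q$; congruences are modulo the indicated polynomials in $q$, coefficientwise in $x$), the following hold: $$(1+q)^2\sum_{k=0}^{n-1}q^{2k}[k+1]_{q^2}\,g_k(x;q^2)\equiv \sum_{k=0}^{n-1}q^{2k}g_k(x;q^2)\pmod{\prod_{\substack{d\mid n\\ d>1\text{ odd}}}\Phi_d(q)},$$ $$\sum_{k=0}^{n-1}q^{k}g_k(x;q)\equiv 0\pmod{\prod_{\substack{d\mid n\\ d\text{ even}}}\Phi_d(q)},$$ $$\sum_{j=0}^{n-1}x^j[j+1]_{q^2}{2j\brack j}_q\sum_{k=j}^{n-1}q^k{k\brack j}_q{k+1\brack j+1}_q\equiv 0\pmod{\prod_{\substack{d\mid n\\ d>2\text{ even}}}\Phi_d(q)}.$$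
   Context: The $q$-binomial coefficients are ${n\brack k}_q=\prod_{i=1}^{k}\frac{1-q^{n-k+i}}{1-q^i}$ for $0\le k\le n$ and $0$ otherwise. The $q$-integer is $[n]_q=\frac{1-q^n}{1-q}$. $\Phi_d(q)$ denotes the $d$-th cyclotomic polynomial. The $q$-Sun polynomials are $g_n(x;q)=\sum_{k=0}^{n}{n\brack k}_q^2{2k\brack k}_q x^k$. An empty product of cyclotomic polynomials equals $1$. *)

theory Defs
  imports "HOL-Computational_Algebra.Polynomial" Complex_Main
begin

text \<open>Polynomials in q: int poly.  Polynomials in x with coefficients in Z[q]: int poly poly.
  All q-analogues are parameterised by the polynomial Q substituted for q
  (Q = [:0,1:] gives q, Q = [:0,1:]^2 gives q^2).  Divisions are exact divisions in Z[q].\<close>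

definition qint :: "int poly \<Rightarrow> nat \<Rightarrow> int poly" where
  "qint Q n = (1 - Q ^ n) div (1 - Q)"

definition qbinom :: "int poly \<Rightarrow> nat \<Rightarrow> nat \<Rightarrow> int poly" where
  "qbinom Q n k = (if k \<le> n then
      (\<Prod>i=1..k. 1 - Q ^ (n - k + i)) div (\<Prod>i=1..k. 1 - Q ^ i) else 0)"

definition gsun :: "int poly \<Rightarrow> nat \<Rightarrow> int poly poly" where
  "gsun Q n = (\<Sum>k=0..n. monom (qbinom Q n k ^ 2 * qbinom Q (2*k) k) k)"

text \<open>The d-th cyclotomic polynomial: product of (q - zeta) over primitive d-th roots of unity,
  which has integer coefficients.\<close>
definition cyclo_complex :: "nat \<Rightarrow> complex poly" where
  "cyclo_complex d = (\<Prod>k\<in>{k. 1 \<le> k \<and> k \<le> d \<and> coprime k d}.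
      [:- cis (2 * pi * real k / real d), 1:])"

definition cyclotomic :: "nat \<Rightarrow> int poly" where
  "cyclotomic d = (THE p. map_poly of_int p = cyclo_complex d)"

definition congq :: "int poly poly \<Rightarrow> int poly poly \<Rightarrow> int poly \<Rightarrow> bool" where
  "congq A B M \<longleftrightarrow> (\<forall>i. M dvd coeff (A - B) i)"

end

theory Submission
  imports Defs
begin

lemma mp_add: "map_poly (of_int :: int \<Rightarrow> 'a::comm_ring_1) (p + q) = map_poly of_int p + map_poly of_int q"
  by (rule poly_eqI) (simp add: coeff_map_poly)
lemma mp_diff: "map_poly (of_int :: int \<Rightarrow> 'a::comm_ring_1) (p - q) = map_poly of_int p - map_poly of_int q"
  by (rule poly_eqI) (simp add: coeff_map_poly)
lemma mp_mult: "map_poly (of_int :: int \<Rightarrow> 'a::comm_ring_1) (p * q) = map_poly of_int p * map_poly of_int q"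
  by (rule poly_eqI) (simp add: coeff_map_poly coeff_mult of_int_sum)
lemma mp_one: "map_poly (of_int :: int \<Rightarrow> 'a::comm_ring_1) 1 = 1"
  by simp
lemma mp_power: "map_poly (of_int :: int \<Rightarrow> 'a::comm_ring_1) (p ^ n) = map_poly of_int p ^ n"
  by (induction n) (simp_all add: mp_mult)
lemma mp_prod: "map_poly (of_int :: int \<Rightarrow> 'a::comm_ring_1) (prod f A) = (\<Prod>x\<in>A. map_poly of_int (f x))"
  by (induction A rule: infinite_finite_induct) (simp_all add: mp_mult)
lemma mp_sum: "map_poly (of_int :: int \<Rightarrow> 'a::comm_ring_1) (sum f A) = (\<Sum>x\<in>A. map_poly of_int (f x))"
  by (induction A rule: infinite_finite_induct) (simp_all add: mp_add)

definition ev :: "complex \<Rightarrow> int poly \<Rightarrow> complex" where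
  "ev z p = poly (map_poly of_int p) z"

lemma ev_add[simp]: "ev z (p + q) = ev z p + ev z q" by (simp add: ev_def mp_add)
lemma ev_diff[simp]: "ev z (p - q) = ev z p - ev z q" by (simp add: ev_def mp_diff)
lemma ev_mult[simp]: "ev z (p * q) = ev z p * ev z q" by (simp add: ev_def mp_mult)
lemma ev_one[simp]: "ev z 1 = 1" by (simp add: ev_def)
lemma ev_zero[simp]: "ev z 0 = 0" by (simp add: ev_def)
lemma ev_power[simp]: "ev z (p ^ n) = ev z p ^ n" by (simp add: ev_def mp_power)
lemma ev_prod[simp]: "ev z (prod f A) = (\<Prod>x\<in>A. ev z (f x))" by (simp add: ev_def mp_prod poly_prod)
lemma ev_sum[simp]: "ev z (sum f A) = (\<Sum>x\<in>A. ev z (f x))" by (simp add: ev_def mp_sum poly_sum)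
lemma ev_X[simp]: "ev z [:0, 1:] = z" by (simp add: ev_def map_poly_pCons)
fun qb :: "'a::comm_ring_1 \<Rightarrow> nat \<Rightarrow> nat \<Rightarrow> 'a" where
  "qb q n 0 = 1"
| "qb q 0 (Suc k) = 0"
| "qb q (Suc n) (Suc k) = qb q n k + q ^ Suc k * qb q n (Suc k)"

lemma qb_gt: "k > n \<Longrightarrow> qb q n k = 0"
proof (induction n arbitrary: k)
  case 0 then show ?case by (cases k) auto
next
  case (Suc n) then show ?case by (cases k) auto
qed

lemma qb_ev: "ev z (qb Q n k) = qb (ev z Q) n k"
  by (induction Q n k rule: qb.induct) simp_all

lemma qb_prod:
  "k \<le> n \<Longrightarrow> qb q n k * (\<Prod>i=1..k. 1 - q^i) = (\<Prod>i<k. 1 - q^(n-i))"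
proof (induction n arbitrary: k)
  case 0 then show ?case by simp
next
  case (Suc n)
  show ?case
  proof (cases k)
    case 0 then show ?thesis by simp
  next
    case (Suc j)
    have ih1: "qb q n j * (\<Prod>i=1..j. 1 - q^i) = (\<Prod>i<j. 1 - q^(n-i))"
      using Suc.IH Suc Suc.prems by simp
    have A: "(\<Prod>i=1..Suc j. 1 - q^i) = (\<Prod>i=1..j. 1 - q^i) * (1 - q^Suc j)"
      by simp
    have B: "(\<Prod>i<Suc j. 1 - q^(Suc n - i)) = (1 - q^Suc n) * (\<Prod>i<j. 1 - q^(n-i))"
      by (subst prod.lessThan_Suc_shift) simp
    have C: "q ^ Suc j * qb q n (Suc j) * (\<Prod>i=1..Suc j. 1 - q^i)
             = q ^ Suc j * (1 - q^(n-j)) * (\<Prod>i<j. 1 - q^(n-i))"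
    proof (cases "Suc j \<le> n")
      case True
      then have "qb q n (Suc j) * (\<Prod>i=1..Suc j. 1 - q^i) = (\<Prod>i<Suc j. 1 - q^(n-i))"
        using Suc.IH by blast
      then show ?thesis by (simp add: mult.assoc mult.commute mult.left_commute)
    next
      case False
      then have "n = j" using Suc Suc.prems by simp
      then show ?thesis by (simp add: qb_gt)
    qed
    have "qb q (Suc n) k * (\<Prod>i=1..k. 1 - q^i)
        = qb q n j * (\<Prod>i=1..j. 1 - q^i) * (1 - q^Suc j) + q ^ Suc j * qb q n (Suc j) * (\<Prod>i=1..Suc j. 1 - q^i)"
      by (simp only: Suc qb.simps A) (simp add: algebra_simps)
    also have "\<dots> = (\<Prod>i<j. 1 - q^(n-i)) * ((1 - q^Suc j) + q ^ Suc j * (1 - q^(n-j)))"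
      by (simp only: ih1 C) (simp add: algebra_simps)
    also have "(1 - q^Suc j) + q ^ Suc j * (1 - q^(n-j)) = 1 - q ^ Suc n"
    proof -
      have "Suc j + (n - j) = Suc n" using Suc Suc.prems by simp
      then have "q ^ Suc j * q^(n-j) = q ^ Suc n" by (metis power_add)
      then show ?thesis by (simp add: algebra_simps)
    qed
    finally have "qb q (Suc n) k * (\<Prod>i=1..k. 1 - q^i) = (1 - q ^ Suc n) * (\<Prod>i<j. 1 - q^(n-i))"
      by (simp only: mult.commute)
    then show ?thesis by (metis B Suc)
  qed
qed

definition ordr :: "complex \<Rightarrow> nat \<Rightarrow> bool" where
  "ordr z d \<longleftrightarrow> (\<forall>m. z ^ m = 1 \<longleftrightarrow> d dvd m)"

lemma ordr_pow: "ordr z d \<Longrightarrow> z ^ m = 1 \<longleftrightarrow> d dvd m" by (simp add: ordr_def)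
lemma ordr_d: "ordr z d \<Longrightarrow> z ^ d = 1" by (simp add: ordr_def)
lemma ordr_nz: "ordr z d \<Longrightarrow> d > 0 \<Longrightarrow> z \<noteq> 0"
  using ordr_d[of z d] by (cases "z = 0") (auto simp: power_0_left)

lemma qb_nn: "qb q n n = 1"
  by (induction n) (simp_all add: qb_gt)

lemma qb_0n: "qb q 0 k = (if k = 0 then 1 else 0)"
  by (cases k) simp_all

lemma qb_dd_zero:
  assumes o: "ordr z d" and k: "0 < k" "k < d"
  shows "qb z d k = 0"
proof -
  have "qb z d k * (\<Prod>i=1..k. 1 - z^i) = (\<Prod>i<k. 1 - z^(d-i))"
    using qb_prod[of k d z] k by simp
  also have "\<dots> = 0"
    using k ordr_d[OF o] by (auto intro!: prod_zero bexI[of _ 0])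
  finally have *: "qb z d k * (\<Prod>i=1..k. 1 - z^i) = 0" .
  have "(\<Prod>i=1..k. 1 - z^i) \<noteq> 0"
  proof
    assume "(\<Prod>i=1..k. 1 - z^i) = 0"
    then obtain i where "i \<in> {1..k}" "1 - z^i = 0" by auto
    then have "d dvd i" using ordr_pow[OF o, of i] by simp
    with \<open>i \<in> {1..k}\<close> k show False by (auto dest: dvd_imp_le)
  qed
  with * show ?thesis by simp
qed

lemma qb_shift:
  assumes o: "ordr z d" and d: "d > 0"
  shows "qb z (n + d) k = qb z n k + (if d \<le> k then qb z n (k - d) else 0)"
proof (induction n arbitrary: k)
  case 0
  consider "k = 0" | "0 < k \<and> k < d" | "k = d" | "k > d" by linarith
  then show ?case
  proof cases
    case 1 then show ?thesis using d by simp
  next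
    case 2 then show ?thesis using qb_dd_zero[OF o] by (simp add: qb_0n)
  next
    case 3 then show ?thesis using d by (simp add: qb_nn qb_0n)
  next
    case 4 then show ?thesis by (simp add: qb_gt qb_0n)
  qed
next
  case (Suc n)
  show ?case
  proof (cases k)
    case 0 then show ?thesis using d by simp
  next
    case (Suc j)
    have e1: "qb z (Suc n + d) k = qb z (n + d) j + z ^ Suc j * qb z (n + d) (Suc j)"
      using Suc by simp
    consider "Suc j < d" | "Suc j = d" | "Suc j > d" by linarith
    then show ?thesis
    proof cases
      case 1
      then show ?thesis using e1 Suc.IH[of j] Suc.IH[of "Suc j"] Suc by simp
    next
      case 2
      have d_eq: "d = Suc j" using 2 by simp
      have "z ^ Suc j = 1" using d_eq ordr_d[OF o] by simp
      then show ?thesis using e1 Suc.IH[of j] Suc.IH[of "Suc j"] Suc by (simp add: d_eq)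
    next
      case 3
      then obtain i where i: "j - d = i" "Suc j - d = Suc i" by auto
      have zz: "z ^ Suc j = z ^ Suc i"
      proof -
        have "Suc j = Suc i + d" using 3 i by simp
        then have "z ^ Suc j = z ^ Suc i * z ^ d" by (simp add: power_add)
        then show ?thesis using ordr_d[OF o] by simp
      qed
      have "qb z (Suc n + d) k = (qb z n j + qb z n i) + z ^ Suc i * (qb z n (Suc j) + qb z n (Suc i))"
        using e1 Suc.IH[of j] Suc.IH[of "Suc j"] 3 i zz by simp
      also have "\<dots> = qb z (Suc n) k + qb z (Suc n) (k - d)"
        using Suc i zz by (simp add: algebra_simps) metis
      finally show ?thesis using 3 Suc by simp
    qed
  qed
qed

lemma qb_lucas:
  assumes o: "ordr z d" and d: "d > 0" and b: "b < d" and e: "e < d"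
  shows "qb z (a*d + b) (c*d + e) = of_nat (a choose c) * qb z b e"
proof (induction a arbitrary: c)
  case 0
  show ?case
  proof (cases c)
    case 0 then show ?thesis by simp
  next
    case (Suc c')
    then have "b < c*d + e" using b by simp
    then show ?thesis using Suc by (simp add: qb_gt)
  qed
next
  case (Suc a)
  have eq: "Suc a * d + b = (a*d + b) + d" by simp
  show ?case
  proof (cases c)
    case 0
    then show ?thesis using e Suc.IH[of 0] by (simp only: eq qb_shift[OF o d]) simp
  next
    case (Suc c')
    have "c * d + e - d = c' * d + e" using Suc by simp
    then have "qb z (Suc a * d + b) (c*d+e) = qb z (a*d+b) (c*d+e) + qb z (a*d+b) (c'*d+e)"
      using Suc by (simp only: eq qb_shift[OF o d]) simp
    also have "\<dots> = of_nat (Suc a choose c) * qb z b e"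
      using Suc.IH[of c] Suc.IH[of c'] Suc by (simp add: algebra_simps)
    finally show ?thesis .
  qed
qed

definition Mp :: "complex \<Rightarrow> nat \<Rightarrow> complex poly" where
  "Mp w k = (\<Prod>i<k. [:-(w^i), 1:])"

definition Fk :: "complex \<Rightarrow> nat \<Rightarrow> complex" where
  "Fk w k = (\<Prod>i=1..k. 1 - w^i) * (\<Prod>i<k. -(w^i))"

lemma poly_Mp: "poly (Mp w k) x = (\<Prod>i<k. x - w^i)"
  by (simp add: Mp_def poly_prod)

lemma qb_Mp: "qb w n k * Fk w k = poly (Mp w k) (w ^ n)"
proof (cases "k \<le> n")
  case True
  have "poly (Mp w k) (w ^ n) = (\<Prod>i<k. -(w^i) * (1 - w^(n-i)))"
    unfolding poly_Mp
  proof (rule prod.cong[OF refl])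
    fix i assume "i \<in> {..<k}"
    then have "w ^ n = w ^ i * w ^ (n - i)" using True by (simp flip: power_add)
    then show "w ^ n - w ^ i = -(w^i) * (1 - w^(n-i))" by (simp add: algebra_simps)
  qed
  also have "\<dots> = (\<Prod>i<k. -(w^i)) * (\<Prod>i<k. 1 - w^(n-i))"
    by (simp only: prod.distrib)
  also have "(\<Prod>i<k. 1 - w^(n-i)) = qb w n k * (\<Prod>i=1..k. 1 - w^i)"
    using qb_prod[OF True, of w] by simp
  finally show ?thesis by (simp add: Fk_def algebra_simps)
next
  case False
  then have "poly (Mp w k) (w ^ n) = 0"
    unfolding poly_Mp by (auto intro!: prod_zero bexI[of _ n])
  then show ?thesis using False by (simp add: qb_gt)
qed

lemma Fk_nz:
  assumes o: "ordr w d" and d: "d > 0" and k: "k < d"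
  shows "Fk w k \<noteq> 0"
proof -
  have w: "w \<noteq> 0" using ordr_nz[OF o d] .
  have "(\<Prod>i=1..k. 1 - w^i) \<noteq> 0"
  proof
    assume "(\<Prod>i=1..k. 1 - w^i) = 0"
    then obtain i where "i \<in> {1..k}" "1 - w^i = 0" by auto
    then have "d dvd i" using ordr_pow[OF o, of i] by simp
    with \<open>i \<in> {1..k}\<close> k show False by (auto dest: dvd_imp_le)
  qed
  moreover have "(\<Prod>i<k. -(w^i)) \<noteq> 0" using w by simp
  ultimately show ?thesis by (simp add: Fk_def)
qed

lemma qb_Mp_div:
  assumes o: "ordr w d" and d: "d > 0" and k: "k < d"
  shows "qb w n k = poly (Mp w k) (w ^ n) / Fk w k"
  using qb_Mp[of w n k] Fk_nz[OF o d k] by (simp add: field_simps)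

lemma degree_Mp: "degree (Mp w k) = k"
  unfolding Mp_def by (subst degree_prod_sum_eq) auto

lemma lead_Mp: "lead_coeff (Mp w k) = 1"
  unfolding Mp_def by (simp add: lead_coeff_prod)

lemma geo_root:
  assumes o: "ordr w d" and d: "d > 0"
  shows "(\<Sum>b<d. (w ^ i) ^ b) = (if d dvd i then of_nat d else 0)"
proof (cases "d dvd i")
  case True
  then have "w ^ i = 1" using ordr_pow[OF o] by simp
  then show ?thesis using True by simp
next
  case False
  then have ne: "w ^ i \<noteq> 1" using ordr_pow[OF o] by simp
  have "(w ^ i) ^ d = 1" using ordr_d[OF o] by (simp flip: power_mult add: mult.commute[of i] power_mult)
  then show ?thesis using False geometric_sum[OF ne, of d] by simp
qed

lemma vanish_sum:
  assumes o: "ordr w d" and d: "d > 0"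
  shows "(\<Sum>b<d. poly R (w ^ b)) = of_nat d * (\<Sum>j\<in>{j\<in>{..degree R}. d dvd j}. coeff R j)"
proof -
  have "(\<Sum>b<d. poly R (w ^ b)) = (\<Sum>b<d. \<Sum>j\<le>degree R. coeff R j * (w ^ j) ^ b)"
    by (simp add: poly_altdef power_mult[symmetric] mult.commute)
  also have "\<dots> = (\<Sum>j\<le>degree R. coeff R j * (\<Sum>b<d. (w ^ j) ^ b))"
    by (subst sum.swap) (simp add: sum_distrib_left)
  also have "\<dots> = (\<Sum>j\<le>degree R. if d dvd j then of_nat d * coeff R j else 0)"
    by (intro sum.cong refl) (simp add: geo_root[OF o d])
  also have "\<dots> = (\<Sum>j\<in>{j\<in>{..degree R}. d dvd j}. of_nat d * coeff R j)"
    by (rule sum.inter_filter[symmetric]) simp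
  also have "\<dots> = of_nat d * (\<Sum>j\<in>{j\<in>{..degree R}. d dvd j}. coeff R j)"
    by (simp add: sum_distrib_left)
  finally show ?thesis .
qed

lemma vanish0:
  assumes o: "ordr w d" and d: "d > 0" and c0: "coeff R 0 = 0" and deg: "degree R < d"
  shows "(\<Sum>b<d. poly R (w ^ b)) = 0"
proof -
  have sub: "{j\<in>{..degree R}. d dvd j} \<subseteq> {0}"
    using deg by (auto dest: dvd_imp_le)
  have "(\<Sum>j\<in>{j\<in>{..degree R}. d dvd j}. coeff R j) = 0"
    by (rule sum.neutral) (use sub c0 in auto)
  then show ?thesis by (simp add: vanish_sum[OF o d])
qed

lemma vanish1:
  assumes o: "ordr w d" and d: "d > 0" and c0: "coeff R 0 = 0" and cd: "coeff R d = 0"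
    and deg: "degree R < 2 * d"
  shows "(\<Sum>b<d. poly R (w ^ b)) = 0"
proof -
  have sub: "{j\<in>{..degree R}. d dvd j} \<subseteq> {0, d}"
  proof
    fix j assume "j \<in> {j\<in>{..degree R}. d dvd j}"
    then have "d dvd j" "j < 2 * d" using deg by auto
    then obtain t where "j = d * t" "d * t < 2 * d" by (auto elim!: dvdE)
    then have "t < 2" using d by simp
    then show "j \<in> {0, d}" using \<open>j = d * t\<close> by (cases t) auto
  qed
  have "(\<Sum>j\<in>{j\<in>{..degree R}. d dvd j}. coeff R j) = 0"
    by (rule sum.neutral) (use sub c0 cd in auto)
  then show ?thesis by (simp add: vanish_sum[OF o d])
qed

definition prim :: "nat \<Rightarrow> nat \<Rightarrow> complex" where
  "prim d k = cis (2 * pi * real k / real d)"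

lemma prim_pow: "prim d k ^ m = prim d (k * m)"
  by (simp add: prim_def DeMoivre mult_ac)

lemma prim_eq1:
  assumes d: "d > 0"
  shows "prim d k = 1 \<longleftrightarrow> d dvd k"
proof
  assume "d dvd k"
  then obtain t where t: "k = d * t" by blast
  have "2 * pi * real k / real d = 2 * pi * real t" using d t by (simp add: field_simps)
  then show "prim d k = 1" unfolding prim_def
    by (metis Ints_of_nat cis_multiple_2pi)
next
  assume "prim d k = 1"
  then have "cos (2 * pi * real k / real d) = 1" unfolding prim_def by (simp add: complex_eq_iff)
  then obtain n :: int where n: "2 * pi * real k / real d = real_of_int n * 2 * pi"
    by (auto simp: cos_one_2pi_int)
  then have "real k = real_of_int n * real d" using d by (simp add: field_simps)
  then have "int k = n * int d" by (metis of_int_eq_iff of_int_mult of_int_of_nat_eq)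
  then have "int d dvd int k" by simp
  then show "d dvd k" by simp
qed

lemma prim_ordr:
  assumes d: "d > 0" and c: "coprime k d"
  shows "ordr (prim d k) d"
  unfolding ordr_def
proof
  fix m
  have "prim d k ^ m = 1 \<longleftrightarrow> d dvd k * m" by (simp add: prim_pow prim_eq1[OF d])
  also have "\<dots> \<longleftrightarrow> d dvd m" using c by (simp add: coprime_dvd_mult_right_iff coprime_commute)
  finally show "prim d k ^ m = 1 \<longleftrightarrow> d dvd m" .
qed

lemma ordr_unique: "ordr z d \<Longrightarrow> ordr z d' \<Longrightarrow> d = d'"
  unfolding ordr_def by (metis dvd_antisym dvd_refl)

lemma prim1: "prim d k = prim d 1 ^ k"
  by (simp add: prim_pow)

lemma ordr_inj:
  assumes o: "ordr w d" and d: "d > 0" and k: "k < d" "k' < d" and eq: "w ^ k = w ^ k'"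
  shows "k = k'"
proof -
  have w: "w \<noteq> 0" using ordr_nz[OF o d] .
  have gen: False if ab: "a < b" "b < d" and e: "w ^ a = w ^ b" for a b
  proof -
    have "w ^ b = w ^ a * w ^ (b - a)" using ab by (simp flip: power_add)
    then have "w ^ (b - a) = 1" using e w by simp
    then have "d dvd (b - a)" using ordr_pow[OF o] by blast
    moreover have "0 < b - a" "b - a < d" using ab by auto
    ultimately show False by (auto dest: dvd_imp_le)
  qed
  show ?thesis
  proof (rule ccontr)
    assume "k \<noteq> k'"
    then consider "k < k'" | "k' < k" by linarith
    then show False
    proof cases
      case 1 then show False using gen[of k k'] k eq by blast
    next
      case 2 then show False using gen[of k' k] k eq by simp
    qed
  qed
qed

definition Kset :: "nat \<Rightarrow> nat set" where
  "Kset d = {k. 1 \<le> k \<and> k \<le> d \<and> coprime k d}"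

definition PR :: "nat \<Rightarrow> complex set" where
  "PR d = prim d ` Kset d"

lemma finite_Kset: "finite (Kset d)" unfolding Kset_def by auto
lemma finite_PR: "finite (PR d)" unfolding PR_def using finite_Kset by auto

lemma prim_mod: "d > 0 \<Longrightarrow> prim d d = prim d 0"
proof -
  assume d: "d > 0"
  have "prim d d = 1" using prim_eq1[OF d] by simp
  moreover have "prim d 0 = 1" by (simp add: prim_def)
  ultimately show ?thesis by simp
qed

lemma inj_prim: 
  assumes d: "d > 0"
  shows "inj_on (prim d) (Kset d)"
proof
  fix k k' assume kk: "k \<in> Kset d" "k' \<in> Kset d" and eq: "prim d k = prim d k'"
  define f where "f x = (if x = d then 0 else x)" for x
  have "prim d (f k) = prim d (f k')" unfolding f_def using eq prim_mod[OF d]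
    by (cases "k = d"; cases "k' = d") simp_all
  then have "prim d 1 ^ f k = prim d 1 ^ f k'" by (metis prim1)
  moreover have "f k < d" "f k' < d" using kk d by (auto simp: f_def Kset_def)
  ultimately have "f k = f k'" using ordr_inj[OF prim_ordr[OF d, of 1] d] by simp
  then show "k = k'" using kk by (auto simp: f_def Kset_def split: if_splits)
qed

lemma cyclo_PR: "d > 0 \<Longrightarrow> cyclo_complex d = (\<Prod>r\<in>PR d. [:-r, 1:])"
  unfolding cyclo_complex_def PR_def
  by (subst prod.reindex[OF inj_prim]) (simp_all add: Kset_def prim_def)

lemma PR_ordr: "d > 0 \<Longrightarrow> r \<in> PR d \<Longrightarrow> ordr r d"
  unfolding PR_def Kset_def using prim_ordr by auto

lemma PR_disj: "d > 0 \<Longrightarrow> e > 0 \<Longrightarrow> d \<noteq> e \<Longrightarrow> PR d \<inter> PR e = {}"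
  using PR_ordr ordr_unique by blast

lemma root_prod_dvd:
  assumes "finite R" "\<forall>r\<in>R. poly p r = 0"
  shows "(\<Prod>r\<in>R. [:-r, 1:]) dvd (p :: complex poly)"
  using assms
proof (induction R arbitrary: p rule: finite_induct)
  case empty then show ?case by simp
next
  case (insert a F)
  then obtain s where s: "p = (\<Prod>r\<in>F. [:-r, 1:]) * s" by (meson dvdE insert_iff)
  have "poly (\<Prod>r\<in>F. [:-r, 1:]) a \<noteq> 0"
    using insert(1,2) by (auto simp: poly_prod)
  moreover have "poly p a = 0" using insert by simp
  ultimately have "poly s a = 0" using s by simp
  then have "[:-a, 1:] dvd s" by (simp add: poly_eq_0_iff_dvd)
  then obtain t where t: "s = [:-a, 1:] * t" by blast
  have H: "(\<Prod>r\<in>insert a F. [:-r, 1:]) = [:-a, 1:] * (\<Prod>r\<in>F. [:-r, 1:])"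
    using insert(1,2) by (simp del: mult_pCons_left)
  have "p = (\<Prod>r\<in>insert a F. [:-r, 1:]) * t" unfolding H s t by (simp only: mult_ac)
  then show ?case by (rule dvdI)
qed

lemma mp_inj: "map_poly (of_int :: int \<Rightarrow> complex) p = map_poly of_int q \<Longrightarrow> p = q"
  by (rule poly_eqI) (metis coeff_map_poly of_int_0 of_int_eq_iff)

lemma mp_degree: "degree (map_poly (of_int :: int \<Rightarrow> complex) p) = degree p"
  by (rule degree_map_poly) simp

lemma mp_lead: "lead_coeff (map_poly (of_int :: int \<Rightarrow> complex) p) = of_int (lead_coeff p)"
  by (simp add: mp_degree coeff_map_poly)

lemma monic_dvd:
  fixes M p :: "int poly"
  assumes lc: "lead_coeff M = 1" and dv: "map_poly (of_int :: int \<Rightarrow> complex) M dvd map_poly of_int p"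
  shows "M dvd p"
proof -
  have M0: "M \<noteq> 0" using lc by auto
  obtain r s where rs: "pseudo_divmod p M = (r, s)" by (cases "pseudo_divmod p M") auto
  from pseudo_divmod[OF M0 rs] lc have eq: "p = M * r + s" and sd: "s = 0 \<or> degree s < degree M"
    by auto
  have "map_poly (of_int :: int \<Rightarrow> complex) p = map_poly of_int M * map_poly of_int r + map_poly of_int s"
    using eq by (simp add: mp_add mp_mult)
  then have "map_poly (of_int :: int \<Rightarrow> complex) M dvd map_poly of_int s"
    using dv by (metis dvd_add_right_iff dvd_triv_left)
  have "s = 0"
  proof (rule ccontr)
    assume "s \<noteq> 0"
    then have "map_poly (of_int :: int \<Rightarrow> complex) s \<noteq> 0" using mp_inj[of s 0] by auto
    with \<open>map_poly (of_int :: int \<Rightarrow> complex) M dvd map_poly of_int s\<close>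
    have "degree (map_poly (of_int :: int \<Rightarrow> complex) M) \<le> degree (map_poly (of_int :: int \<Rightarrow> complex) s)"
      by (rule dvd_imp_degree_le)
    then show False using sd \<open>s \<noteq> 0\<close> by (simp add: mp_degree)
  qed
  then show ?thesis using eq by simp
qed

lemma roots_union:
  assumes d: "d > 0"
  shows "{z::complex. z ^ d = 1} = (\<Union>e\<in>{e. e dvd d}. PR e)"
proof
  show "(\<Union>e\<in>{e. e dvd d}. PR e) \<subseteq> {z. z ^ d = 1}"
  proof
    fix z assume "z \<in> (\<Union>e\<in>{e. e dvd d}. PR e)"
    then obtain e k where e: "e dvd d" and z: "z = prim e k" by (auto simp: PR_def)
    have "e > 0" using e d by (auto intro: Nat.gr0I)
    have "e dvd k * d" using e by simp
    then have "prim e (k * d) = 1" using prim_eq1[OF \<open>e > 0\<close>] by simp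
    then show "z \<in> {z. z ^ d = 1}" using z by (simp add: prim_pow)
  qed
next
  show "{z. z ^ d = 1} \<subseteq> (\<Union>e\<in>{e. e dvd d}. PR e)"
  proof
    fix z :: complex assume "z \<in> {z. z ^ d = 1}"
    then obtain m where m: "m < d" "z = prim d m"
      using bij_betw_roots_unity[OF d] unfolding bij_betw_def prim_def by force
    define m' where "m' = (if m = 0 then d else m)"
    have z': "z = prim d m'" using m prim_mod[OF d] by (simp add: m'_def)
    have m'1: "1 \<le> m'" "m' \<le> d" using m d by (auto simp: m'_def)
    define g where "g = gcd m' d"
    have g0: "g > 0" using d by (simp add: g_def)
    define e where "e = d div g"
    define k where "k = m' div g"
    have de: "d = e * g" by (simp add: e_def g_def)
    have mk: "m' = k * g" by (simp add: k_def g_def)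
    have e0: "e > 0" using d de by (auto intro: Nat.gr0I)
    have "e dvd d" using de by simp
    have cop: "coprime k e" unfolding k_def e_def g_def by (rule div_gcd_coprime) (use d in auto)
    have "1 \<le> k" using m'1 mk by (cases k) auto
    moreover have "k \<le> e" using m'1 de mk g0 by simp
    ultimately have "k \<in> Kset e" using cop by (simp add: Kset_def)
    moreover have "prim d m' = prim e k"
    proof -
      have "real m' / real d = real k / real e" using de mk g0 e0 by (simp add: field_simps)
      then show ?thesis unfolding prim_def by (metis times_divide_eq_right)
    qed
    ultimately show "z \<in> (\<Union>e\<in>{e. e dvd d}. PR e)" using z' \<open>e dvd d\<close> by (auto simp: PR_def)
  qed
qed

lemma prod_roots_unity:
  assumes d: "d > 0"
  shows "(\<Prod>r\<in>{z::complex. z ^ d = 1}. [:-r, 1:]) = [:0, 1:] ^ d - 1"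
proof -
  let ?U = "{z::complex. z ^ d = 1}"
  let ?P = "\<Prod>r\<in>?U. [:-r, 1:]"
  let ?Q = "[:0, 1:] ^ d - (1 :: complex poly)"
  have fin: "finite ?U" using d by (simp add: finite_roots_unity)
  have "?P dvd ?Q"
    by (rule root_prod_dvd[OF fin]) (simp add: poly_monom)
  then obtain s where s: "?Q = ?P * s" by (rule dvdE)
  have dQ: "degree ?Q = d"
  proof -
    have "degree (-1 :: complex poly) < degree ([:0,1:]^d :: complex poly)"
      using d by (simp add: degree_linear_power)
    then have "degree ([:0,1:]^d + (-1) :: complex poly) = d"
      by (subst degree_add_eq_left) (simp_all add: degree_linear_power)
    then show ?thesis by simp
  qed
  have dP: "degree ?P = d" using card_roots_unity_eq[OF d] by (subst degree_prod_sum_eq) auto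
  have lP: "lead_coeff ?P = 1" by (simp add: lead_coeff_prod)
  have c1: "coeff ([:0, 1:] ^ d) d = (1::complex)"
    using lead_coeff_power[of "[:0, 1::complex:]" d] by (simp add: degree_linear_power)
  have lQ: "lead_coeff ?Q = 1" using d dQ c1 by simp
  have Q0: "?Q \<noteq> 0" using lQ by auto
  have s0: "s \<noteq> 0" using s Q0 by auto
  have P0: "?P \<noteq> 0" using lP by auto
  have "degree ?Q = degree ?P + degree s" using s s0 P0 by (simp add: degree_mult_eq)
  then have "degree s = 0" using dP dQ by simp
  moreover have "lead_coeff ?Q = lead_coeff ?P * lead_coeff s" using s by (simp add: lead_coeff_mult)
  ultimately have "s = 1" using lP lQ by (metis degree_0_id mult_1 one_poly_eq_simps(1))
  then show ?thesis using s by simp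
qed

lemma Xd_cyclo:
  assumes d: "d > 0"
  shows "[:0, 1:] ^ d - 1 = (\<Prod>e\<in>{e. e dvd d}. cyclo_complex e)"
proof -
  have fin: "finite {e. e dvd d}" using d by simp
  have pos: "\<And>e. e \<in> {e. e dvd d} \<Longrightarrow> e > 0" using d by (auto intro: Nat.gr0I)
  have "[:0, 1:] ^ d - 1 = (\<Prod>r\<in>(\<Union>e\<in>{e. e dvd d}. PR e). [:-r, 1:])"
    using prod_roots_unity[OF d] roots_union[OF d] by simp
  also have "\<dots> = (\<Prod>e\<in>{e. e dvd d}. \<Prod>r\<in>PR e. [:-r, 1:])"
    by (rule prod.UNION_disjoint) (use fin finite_PR PR_disj pos in auto)
  also have "\<dots> = (\<Prod>e\<in>{e. e dvd d}. cyclo_complex e)"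
    by (rule prod.cong[OF refl]) (simp add: cyclo_PR pos)
  finally show ?thesis .
qed

lemma lead_cyclo: "d > 0 \<Longrightarrow> lead_coeff (cyclo_complex d) = 1"
  by (simp add: cyclo_PR lead_coeff_prod)

lemma cyclo_int: "d > 0 \<Longrightarrow> \<exists>p. map_poly (of_int :: int \<Rightarrow> complex) p = cyclo_complex d"
proof (induction d rule: less_induct)
  case (less d)
  define E where "E = {e. e dvd d \<and> e < d}"
  have finE: "finite E" using less.prems by (simp add: E_def)
  have posE: "\<And>e. e \<in> E \<Longrightarrow> e > 0" using less.prems by (auto simp: E_def intro: Nat.gr0I)
  have "\<forall>e\<in>E. \<exists>p. map_poly (of_int :: int \<Rightarrow> complex) p = cyclo_complex e"
    using less.IH posE by (auto simp: E_def)
  then obtain P where P: "\<And>e. e \<in> E \<Longrightarrow> map_poly (of_int :: int \<Rightarrow> complex) (P e) = cyclo_complex e"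
    by metis
  define D where "D = (\<Prod>e\<in>E. P e)"
  have mD: "map_poly (of_int :: int \<Rightarrow> complex) D = (\<Prod>e\<in>E. cyclo_complex e)"
    by (simp add: D_def mp_prod P)
  have "{e. e dvd d} = insert d E" using less.prems by (auto simp: E_def dest: dvd_imp_le)
  then have X: "[:0, 1:] ^ d - 1 = cyclo_complex d * map_poly (of_int :: int \<Rightarrow> complex) D"
    using Xd_cyclo[OF less.prems] finE by (simp add: mD E_def)
  have "lead_coeff (map_poly (of_int :: int \<Rightarrow> complex) D) = 1"
    using mD posE by (simp add: lead_coeff_prod lead_cyclo)
  then have lD: "lead_coeff D = 1" by (simp add: mp_lead)
  have mX: "map_poly (of_int :: int \<Rightarrow> complex) ([:0, 1:] ^ d - 1) = [:0, 1:] ^ d - 1"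
    by (simp add: mp_diff mp_power map_poly_pCons)
  have "map_poly (of_int :: int \<Rightarrow> complex) D dvd map_poly of_int ([:0, 1:] ^ d - 1)"
    using X mX by simp
  then have "D dvd [:0, 1:] ^ d - 1" using monic_dvd[OF lD] by blast
  then obtain r where r: "[:0, 1:] ^ d - 1 = D * r" by (rule dvdE)
  have "map_poly (of_int :: int \<Rightarrow> complex) D * map_poly of_int r = map_poly of_int D * cyclo_complex d"
    using X mX r by (metis mp_mult mult.commute)
  moreover have "map_poly (of_int :: int \<Rightarrow> complex) D \<noteq> 0" using lD mp_lead[of D] by auto
  ultimately have "map_poly (of_int :: int \<Rightarrow> complex) r = cyclo_complex d" by simp
  then show ?case by blast
qed

lemma map_cyclotomic: "d > 0 \<Longrightarrow> map_poly (of_int :: int \<Rightarrow> complex) (cyclotomic d) = cyclo_complex d"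
  unfolding cyclotomic_def
  by (rule theI'[where P = "\<lambda>p. map_poly of_int p = cyclo_complex d"]) (use cyclo_int mp_inj in metis)

lemma cyclo_dvd:
  assumes fin: "finite S" and pos: "\<And>d. d \<in> S \<Longrightarrow> d > 0"
    and roots: "\<And>d k. d \<in> S \<Longrightarrow> k \<in> Kset d \<Longrightarrow> ev (prim d k) p = 0"
  shows "(\<Prod>d\<in>S. cyclotomic d) dvd p"
proof -
  have mM: "map_poly (of_int :: int \<Rightarrow> complex) (\<Prod>d\<in>S. cyclotomic d) = (\<Prod>d\<in>S. cyclo_complex d)"
    by (simp add: mp_prod map_cyclotomic pos)
  also have "\<dots> = (\<Prod>d\<in>S. \<Prod>r\<in>PR d. [:-r, 1:])"
    by (rule prod.cong[OF refl]) (simp add: cyclo_PR pos)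
  also have "\<dots> = (\<Prod>r\<in>(\<Union>d\<in>S. PR d). [:-r, 1:])"
    by (rule prod.UNION_disjoint[symmetric]) (use fin finite_PR PR_disj pos in auto)
  finally have mM': "map_poly (of_int :: int \<Rightarrow> complex) (\<Prod>d\<in>S. cyclotomic d) = (\<Prod>r\<in>(\<Union>d\<in>S. PR d). [:-r, 1:])" .
  have "(\<Prod>r\<in>(\<Union>d\<in>S. PR d). [:-r, 1:]) dvd map_poly (of_int :: int \<Rightarrow> complex) p"
    by (rule root_prod_dvd) (use fin finite_PR roots in \<open>auto simp: PR_def ev_def\<close>)
  moreover have "lead_coeff (\<Prod>d\<in>S. cyclotomic d) = 1"
  proof -
    have "lead_coeff (map_poly (of_int :: int \<Rightarrow> complex) (\<Prod>d\<in>S. cyclotomic d)) = 1"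
      using mM by (simp add: lead_coeff_prod lead_cyclo pos)
    then show ?thesis by (simp add: mp_lead)
  qed
  ultimately show ?thesis using monic_dvd mM' by metis
qed

lemma deg_lin: "degree (\<Prod>x\<in>A. [:-(r x :: complex), 1:]) = card A"
  by (subst degree_prod_sum_eq) auto

lemma lead_lin: "coeff (\<Prod>x\<in>A. [:-(r x :: complex), 1:]) (card A) = 1"
  using lead_coeff_prod[of "\<lambda>x. [:-(r x :: complex), 1:]" A] by (simp add: deg_lin)

lemma high_lin: "j > card A \<Longrightarrow> coeff (\<Prod>x\<in>A. [:-(r x :: complex), 1:]) j = 0"
  by (simp add: coeff_eq_0 deg_lin)

lemma sub_lin:
  assumes "finite A"
  shows "coeff (pCons 0 (\<Prod>x\<in>A. [:-(r x :: complex), 1:])) (card A) = -(\<Sum>x\<in>A. r x)"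
  using assms
proof (induction A rule: finite_induct)
  case empty then show ?case by simp
next
  case (insert a F)
  let ?P = "\<Prod>x\<in>F. [:-(r x :: complex), 1:]"
  have P': "(\<Prod>x\<in>insert a F. [:-(r x :: complex), 1:]) = smult (-(r a)) ?P + pCons 0 ?P"
    using insert(1,2) by simp
  have "coeff (pCons 0 (\<Prod>x\<in>insert a F. [:-(r x :: complex), 1:])) (card (insert a F))
      = coeff (\<Prod>x\<in>insert a F. [:-(r x :: complex), 1:]) (card F)"
    using insert(1,2) by simp
  also have "\<dots> = -(r a) * coeff ?P (card F) + coeff (pCons 0 ?P) (card F)"
    by (simp only: P' coeff_add coeff_smult)
  also have "\<dots> = -(r a) - (\<Sum>x\<in>F. r x)"
    using lead_lin[of r F] insert.IH by simp
  also have "\<dots> = -(\<Sum>x\<in>insert a F. r x)" using insert(1,2) by simp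
  finally show ?case .
qed

lemma Mp_sq: "Mp w e ^ 2 = (\<Prod>x\<in>{..<e} \<times> {0::nat, 1}. [:-(w ^ fst x), 1:])"
proof -
  have "Mp w e ^ 2 = (\<Prod>i<e. [:-(w^i), 1:] ^ 2)" by (simp add: Mp_def prod_power_distrib)
  also have "\<dots> = (\<Prod>i<e. \<Prod>y\<in>{0::nat, 1}. [:-(w ^ fst (i, y)), 1:])"
    by (simp add: power2_eq_square)
  also have "\<dots> = (\<Prod>x\<in>{..<e} \<times> {0::nat, 1}. [:-(w ^ fst x), 1:])"
    by (subst prod.cartesian_product) (simp add: case_prod_beta)
  finally show ?thesis .
qed

lemma card_A2: "card ({..<e} \<times> {0::nat, 1}) = 2 * e"
  by (simp add: card_cartesian_product)

lemma sum_A2: "(\<Sum>x\<in>{..<e} \<times> {0::nat, 1}. (w::complex) ^ fst x) = 2 * (\<Sum>i<e. w ^ i)"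
proof -
  have "(\<Sum>x\<in>{..<e} \<times> {0::nat, 1}. w ^ fst x) = (\<Sum>i<e. \<Sum>y\<in>{0::nat, 1}. w ^ fst (i, y))"
    by (subst sum.cartesian_product) (simp add: case_prod_beta)
  also have "\<dots> = 2 * (\<Sum>i<e. w ^ i)" by (simp add: sum_distrib_left)
  finally show ?thesis .
qed

lemma coeff_Mp_sq:
  "coeff (Mp w e ^ 2) (2 * e) = 1"
  "coeff (pCons 0 (Mp w e ^ 2)) (2 * e) = - 2 * (\<Sum>i<e. w ^ i)"
  unfolding Mp_sq
  using lead_lin[of "\<lambda>x. w ^ fst x" "{..<e} \<times> {0::nat, 1}", unfolded card_A2]
    sub_lin[of "{..<e} \<times> {0::nat, 1}" "\<lambda>x. w ^ fst x", unfolded card_A2 sum_A2]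
  by simp_all

lemma degree_Mp_sq: "degree (Mp w e ^ 2) = 2 * e"
  by (metis Mp_sq deg_lin card_A2)

lemma local2:
  assumes o: "ordr z d" and d: "d > 0" and ev: "even d" and e: "2 * e < d"
  shows "(\<Sum>b<d. z ^ b * (qb z b e) ^ 2) = 0"
proof -
  have ed: "e < d" using e by simp
  define R where "R = [:0, 1:] * Mp z e ^ 2"
  have t: "z ^ b * (qb z b e) ^ 2 = poly R (z ^ b) / (Fk z e) ^ 2" for b
    by (simp add: R_def qb_Mp_div[OF o d ed] power_divide)
  have "(\<Sum>b<d. z ^ b * (qb z b e) ^ 2) = (\<Sum>b<d. poly R (z ^ b)) / (Fk z e) ^ 2"
    by (simp add: t sum_divide_distrib)
  also have "(\<Sum>b<d. poly R (z ^ b)) = 0"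
  proof (rule vanish0[OF o d])
    show "coeff R 0 = 0" by (simp add: R_def)
    have "degree R \<le> 1 + 2 * e" unfolding R_def
      by (rule order.trans[OF degree_mult_le]) (simp add: degree_Mp_sq)
    moreover have "2 * e + 1 \<noteq> d" using ev by auto
    ultimately show "degree R < d" using e by simp
  qed
  finally show ?thesis by simp
qed

lemma local3:
  assumes o: "ordr z d" and d: "d > 0" and e: "2 * e + 2 < d"
  shows "(\<Sum>b<d. z ^ b * qb z b e * qb z (b + 1) (e + 1)) = 0"
proof -
  have ed: "e < d" "e + 1 < d" using e by simp_all
  define R where "R = [:0, 1:] * Mp z e * (Mp z (e + 1) \<circ>\<^sub>p [:0, z:])"
  have t: "z ^ b * qb z b e * qb z (b + 1) (e + 1) = poly R (z ^ b) / (Fk z e * Fk z (e + 1))" for b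
    unfolding qb_Mp_div[OF o d ed(1)] qb_Mp_div[OF o d ed(2)]
    by (simp add: R_def poly_pcompose mult_ac)
  have "(\<Sum>b<d. z ^ b * qb z b e * qb z (b + 1) (e + 1)) = (\<Sum>b<d. poly R (z ^ b)) / (Fk z e * Fk z (e + 1))"
    by (simp only: t sum_divide_distrib)
  also have "(\<Sum>b<d. poly R (z ^ b)) = 0"
  proof (rule vanish0[OF o d])
    show "coeff R 0 = 0" by (simp add: R_def)
    have d1: "degree ([:0, 1:] * Mp z e) \<le> 1 + e"
      by (rule order.trans[OF degree_mult_le]) (simp add: degree_Mp)
    have d2: "degree (Mp z (e + 1) \<circ>\<^sub>p [:0, z:]) \<le> e + 1"
      by (rule order.trans[OF degree_pcompose_le]) (simp add: degree_Mp)
    have "degree R \<le> (1 + e) + (e + 1)" unfolding R_def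
      by (rule order.trans[OF degree_mult_le]) (use d1 d2 in linarith)
    then show "degree R < d" using e by simp
  qed
  finally show ?thesis by simp
qed

lemma ordr_sq:
  assumes o: "ordr z d" and od: "odd d"
  shows "ordr (z^2) d"
  unfolding ordr_def
proof
  fix m
  have "(z^2)^m = 1 \<longleftrightarrow> d dvd 2 * m" by (simp add: ordr_pow[OF o] flip: power_mult)
  also have "\<dots> \<longleftrightarrow> d dvd m"
    using od by (simp add: coprime_dvd_mult_right_iff)
  finally show "(z^2)^m = 1 \<longleftrightarrow> d dvd m" .
qed

lemma t1:
  fixes z :: complex assumes a: "z - 1 \<noteq> 0" "z + 1 \<noteq> 0"
  shows "- ((1+z)^2) / ((z - 1) * (z + 1)) - 1 = -2 * z / (z - 1)"
proof -
  have "- ((1+z)^2) / ((z - 1) * (z + 1)) - 1 = (- ((1+z)^2) - (z - 1) * (z + 1)) / ((z - 1) * (z + 1))"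
    using a by (simp add: diff_divide_distrib)
  also have "- ((1+z)^2) - (z - 1) * (z + 1) = (-2 * z) * (z + 1)"
    by (simp add: power2_eq_square algebra_simps)
  also have "(-2 * z) * (z + 1) / ((z - 1) * (z + 1)) = -2 * z / (z - 1)"
    using a by simp
  finally show ?thesis .
qed
lemma t2:
  fixes z :: complex assumes a: "z - 1 \<noteq> 0" "z + 1 \<noteq> 0" and z0: "z \<noteq> 0"
  shows "((1+z)^2 * z^2 / ((z - 1) * (z + 1))) * ((1 - z) / (z * ((z - 1) * (z + 1)))) = - z / (z - 1)"
proof -
  have "((1+z)^2 * z^2 / ((z - 1) * (z + 1))) * ((1 - z) / (z * ((z - 1) * (z + 1))))
     = ((1+z)^2 * z^2 * (1 - z)) / (((z - 1) * (z + 1)) * (z * ((z - 1) * (z + 1))))"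
    by simp
  also have "(1+z)^2 * z^2 * (1 - z) = (- z) * ((z + 1) * (z + 1) * z * (z - 1))"
    by (simp add: power2_eq_square algebra_simps)
  also have "((z - 1) * (z + 1)) * (z * ((z - 1) * (z + 1))) = (z - 1) * ((z + 1) * (z + 1) * z * (z - 1))"
    by (simp add: algebra_simps)
  also have "(- z) * ((z + 1) * (z + 1) * z * (z - 1)) / ((z - 1) * ((z + 1) * (z + 1) * z * (z - 1))) = - z / (z - 1)"
    using a z0 by (simp del: mult_minus_left)
  finally show ?thesis .
qed
lemma key_alg:
  fixes z :: complex
  assumes z0: "z \<noteq> 0" and w1: "z^2 \<noteq> 1" and y: "z ^ (2 * e) = 1 / z"
  shows "(- ((1+z)^2) / (z^2-1) - 1) + ((1+z)^2 * z^2 / (z^2-1)) * (- 2 * (\<Sum>i<e. (z^2)^i)) = 0"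
proof -
  have w1': "z^2 - 1 \<noteq> 0" using w1 by simp
  have f: "z^2 - 1 = (z - 1) * (z + 1)" by (simp add: power2_eq_square algebra_simps)
  have a: "z - 1 \<noteq> 0" "z + 1 \<noteq> 0" using w1' f by auto
  have S: "(\<Sum>i<e. (z^2)^i) = (1 - z) / (z * ((z - 1) * (z + 1)))"
  proof -
    have "(\<Sum>i<e. (z^2)^i) = ((z^2)^e - 1) / (z^2 - 1)" using geometric_sum[OF w1, of e] .
    also have "(z^2)^e = 1 / z" using y by (simp flip: power_mult)
    finally show ?thesis using z0 a unfolding f by (simp add: field_simps)
  qed
  have hA: "- ((1+z)^2) / (z^2-1) - 1 = -2 * z / (z - 1)"
    unfolding f using t1[OF a] .
  have hBS: "((1+z)^2 * z^2 / (z^2-1)) * (\<Sum>i<e. (z^2)^i) = - z / (z - 1)"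
    unfolding S f using t2[OF a z0] .
  have "(- ((1+z)^2) / (z^2-1) - 1) + ((1+z)^2 * z^2 / (z^2-1)) * (- 2 * (\<Sum>i<e. (z^2)^i))
      = (- ((1+z)^2) / (z^2-1) - 1) - 2 * (((1+z)^2 * z^2 / (z^2-1)) * (\<Sum>i<e. (z^2)^i))"
    by (simp add: algebra_simps)
  also have "\<dots> = 0" unfolding hA hBS by (simp add: field_simps)
  finally show ?thesis .
qed

lemma local1:
  assumes o: "ordr z d" and d1: "d > 1" and od: "odd d" and e: "2 * e < d" and wz: "w = z^2"
  shows "(\<Sum>b<d. ((1+z)^2 * w^b * (\<Sum>i<b+1. w^i) - w^b) * (qb w b e)^2) = 0"
proof -
  have d: "d > 0" using d1 by simp
  have ow: "ordr w d" using ordr_sq[OF o od] wz by simp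
  have z0: "z \<noteq> 0" using ordr_nz[OF o d] .
  have w1: "w \<noteq> 1"
  proof
    assume "w = 1"
    then have "d dvd 1" using ordr_pow[OF ow, of 1] by simp
    then show False using d1 by simp
  qed
  have w1': "w - 1 \<noteq> 0" using w1 by simp
  have ed: "e < d" using e by simp
  define \<alpha> where "\<alpha> = - ((1+z)^2) / (w-1) - 1"
  define \<beta> where "\<beta> = (1+z)^2 * w / (w-1)"
  define P where "P = Mp w e ^ 2"
  define R where "R = [:0,1:] * ([:\<alpha>, \<beta>:] * P)"
  have t: "((1+z)^2 * w^b * (\<Sum>i<b+1. w^i) - w^b) * (qb w b e)^2 = poly R (w^b) / (Fk w e)^2" for b
  proof -
    have g: "(\<Sum>i<b+1. w^i) = (w^(b+1) - 1)/(w - 1)" by (rule geometric_sum[OF w1])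
    have "(1+z)^2 * w^b * ((w^(b+1) - 1)/(w - 1)) - w^b = w^b * (\<alpha> + \<beta> * w^b)"
      unfolding \<alpha>_def \<beta>_def divide_inverse power_Suc2 Suc_eq_plus1[symmetric] by algebra
    then show ?thesis unfolding g by (simp add: R_def P_def qb_Mp_div[OF ow d ed] power_divide algebra_simps)
  qed
  have "(\<Sum>b<d. ((1+z)^2 * w^b * (\<Sum>i<b+1. w^i) - w^b) * (qb w b e)^2)
      = (\<Sum>b<d. poly R (w ^ b)) / (Fk w e)^2"
    by (simp only: t sum_divide_distrib)
  also have "(\<Sum>b<d. poly R (w ^ b)) = 0"
  proof -
    have c0: "coeff R 0 = 0" by (simp add: R_def)
    have dP: "degree P = 2 * e" unfolding P_def by (rule degree_Mp_sq)
    have dL: "degree ([:\<alpha>, \<beta>:] * P) \<le> 1 + 2 * e"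
      by (rule order.trans[OF degree_mult_le]) (simp add: dP)
    have dR: "degree R \<le> 1 + (1 + 2 * e)" unfolding R_def
      by (rule order.trans[OF degree_mult_le]) (use dL in simp)
    show ?thesis
    proof (cases "2 * e + 2 < d")
      case True
      then show ?thesis using vanish0[OF ow d c0] dR by simp
    next
      case False
      then have de: "d = 2 * e + 1" using e od by presburger
      have e1: "e \<ge> 1" using de d1 by simp
      have cR: "coeff R d = \<alpha> * coeff P (2 * e) + \<beta> * coeff (pCons 0 P) (2 * e)"
        using e1 unfolding R_def de by (simp add: coeff_pCons split: nat.splits)
      have y: "z ^ (2 * e) = 1 / z"
      proof -
        have "z ^ (2 * e) * z = 1" using ordr_d[OF o] de by (simp add: power_Suc2[symmetric] del: power_Suc2)
        then show ?thesis using z0 by (simp add: field_simps)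
      qed
      have "coeff R d = 0"
        unfolding cR P_def coeff_Mp_sq \<alpha>_def \<beta>_def wz
        using key_alg[OF z0 _ y] w1 wz by (simp add: mult.assoc)
      moreover have "degree R < 2 * d" using dR de e1 by simp
      ultimately show ?thesis using vanish1[OF ow d c0] by simp
    qed
  qed
  finally show ?thesis by simp
qed

lemma sum_split:
  fixes d N :: nat and f :: "nat \<Rightarrow> 'b::comm_monoid_add"
  assumes d: "d > 0"
  shows "(\<Sum>k<N*d. f k) = (\<Sum>a<N. \<Sum>b<d. f (a*d + b))"
proof -
  have "(\<Sum>k<N*d. f k) = (\<Sum>x\<in>{..<N} \<times> {..<d}. f (fst x * d + snd x))"
  proof (rule sum.reindex_bij_witness[where i = "\<lambda>x. fst x * d + snd x" and j = "\<lambda>k. (k div d, k mod d)"])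
    fix k assume "k \<in> {..<N*d}"
    then show "fst (k div d, k mod d) * d + snd (k div d, k mod d) = k" by simp
  next
    fix k assume k: "k \<in> {..<N*d}"
    have "k div d < N" using k d by (simp add: div_less_iff_less_mult)
    then show "(k div d, k mod d) \<in> {..<N} \<times> {..<d}" using d by simp
  next
    fix x assume x: "x \<in> {..<N} \<times> {..<d}"
    then show "(((fst x * d + snd x) div d), ((fst x * d + snd x) mod d)) = x" using d by auto
  next
    fix x assume x: "x \<in> {..<N} \<times> {..<d}"
    then have "fst x * d + snd x < fst x * d + d" by auto
    also have "\<dots> = Suc (fst x) * d" by simp
    also have "\<dots> \<le> N * d" using x by (intro mult_le_mono1) auto
    finally show "fst x * d + snd x \<in> {..<N*d}" by simp
  next
    fix k assume "k \<in> {..<N*d}"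
    then show "f (fst (k div d, k mod d) * d + snd (k div d, k mod d)) = f k" by simp
  qed
  also have "\<dots> = (\<Sum>a<N. \<Sum>b<d. f (a*d + b))"
    by (subst sum.cartesian_product) (simp add: case_prod_beta)
  finally show ?thesis .
qed

lemma split_lucas:
  assumes d: "d > 0" and dn: "d dvd n"
    and g: "\<And>a b. b < d \<Longrightarrow> g (a*d + b) = of_nat (a choose c) ^ 2 * h b"
    and h: "(\<Sum>b<d. h b) = (0::complex)"
  shows "(\<Sum>k<n. g k) = 0"
proof -
  obtain N where n: "n = N * d" using dn by (metis dvdE mult.commute)
  have "(\<Sum>k<n. g k) = (\<Sum>a<N. \<Sum>b<d. g (a*d + b))" unfolding n by (rule sum_split[OF d])
  also have "\<dots> = (\<Sum>a<N. of_nat (a choose c) ^ 2 * (\<Sum>b<d. h b))"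
    by (simp add: g sum_distrib_left)
  also have "\<dots> = 0" using h by simp
  finally show ?thesis .
qed

lemma pow_period:
  assumes "ordr z d" shows "z ^ (a*d + b) = z ^ b"
proof -
  have "z ^ (a*d) = 1" using ordr_d[OF assms] by (simp add: mult.commute[of a] power_mult)
  then show ?thesis by (simp add: power_add)
qed

lemma qb_2j_zero:
  assumes o: "ordr z d" and d: "d > 0" and e: "d \<le> 2 * (j mod d)"
  shows "qb z (2 * j) j = 0"
proof -
  define c e' where "c = j div d" and "e' = j mod d"
  have j: "j = c * d + e'" by (simp add: c_def e'_def)
  have e'd: "e' < d" using d by (simp add: e'_def)
  have eq2: "2 * j = (2 * c + 1) * d + (2 * e' - d)" using j e e'_def by (simp add: algebra_simps)
  have L: "qb z ((2 * c + 1) * d + (2 * e' - d)) (c * d + e') = of_nat ((2 * c + 1) choose c) * qb z (2 * e' - d) e'"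
    by (rule qb_lucas[OF o d _ e'd]) (use e'd in simp)
  have "qb z (2 * j) j = of_nat ((2 * c + 1) choose c) * qb z (2 * e' - d) e'"
    using L eq2 j by metis
  also have "qb z (2 * e' - d) e' = 0" using e'd e by (intro qb_gt) (simp add: e'_def)
  finally show ?thesis by simp
qed

lemma G2:
  assumes o: "ordr z d" and d: "d > 0" and ev: "even d" and dn: "d dvd n"
  shows "(\<Sum>k<n. z ^ k * qb z k j ^ 2) * qb z (2 * j) j = 0"
proof (cases "d \<le> 2 * (j mod d)")
  case True then show ?thesis by (simp add: qb_2j_zero[OF o d])
next
  case False
  define c e where "c = j div d" and "e = j mod d"
  have j: "j = c * d + e" by (simp add: c_def e_def)
  have ed: "e < d" using d by (simp add: e_def)
  have "(\<Sum>k<n. z ^ k * qb z k j ^ 2) = 0"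
  proof (rule split_lucas[OF d dn])
    fix a b assume b: "b < d"
    show "z ^ (a*d + b) * qb z (a*d + b) j ^ 2 = of_nat (a choose c) ^ 2 * (z ^ b * qb z b e ^ 2)"
      unfolding j qb_lucas[OF o d b ed] pow_period[OF o] by (simp add: power_mult_distrib)
  next
    show "(\<Sum>b<d. z ^ b * qb z b e ^ 2) = 0"
      by (rule local2[OF o d ev]) (use False e_def in simp)
  qed
  then show ?thesis by simp
qed

lemma qb_lucas1:
  assumes o: "ordr z d" and d: "d > 0" and b: "b < d" and e: "e + 1 < d"
  shows "qb z (a*d + b + 1) (c*d + e + 1) = of_nat (a choose c) * qb z (b + 1) (e + 1)"
proof (cases "b + 1 < d")
  case True
  have "qb z (a*d + (b + 1)) (c*d + (e + 1)) = of_nat (a choose c) * qb z (b + 1) (e + 1)"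
    by (rule qb_lucas[OF o d True e])
  then show ?thesis by (metis add.assoc)
next
  case False
  then have bd: "b + 1 = d" using b by simp
  have eqA: "a*d + b + 1 = Suc a * d + 0" using bd by simp
  have eqB: "c*d + e + 1 = c*d + (e + 1)" by simp
  have L: "qb z (Suc a * d + 0) (c*d + (e + 1)) = of_nat (Suc a choose c) * qb z 0 (e + 1)"
    by (rule qb_lucas[OF o d d e])
  have Z: "qb z 0 (e + 1) = 0" by (simp add: qb_0n)
  have l: "qb z (a*d + b + 1) (c*d + e + 1) = 0" using eqA eqB L Z by (metis mult_zero_right)
  have "qb z (b + 1) (e + 1) = 0" unfolding bd by (rule qb_dd_zero[OF o]) (use e in auto)
  then show ?thesis using l by simp
qed

lemma G3:
  assumes o: "ordr z d" and d2: "d > 2" and ev: "even d" and dn: "d dvd n" and n0: "n > 0"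
  shows "(\<Sum>i<j+1. (z^2)^i) * qb z (2 * j) j * (\<Sum>k\<in>{j..n-1}. z ^ k * qb z k j * qb z (k+1) (j+1)) = 0"
proof -
  have d: "d > 0" using d2 by simp
  define c e where "c = j div d" and "e = j mod d"
  have j: "j = c * d + e" by (simp add: c_def e_def)
  have ed: "e < d" using d by (simp add: e_def)
  have "d \<le> 2 * e \<or> 2 * e + 2 = d \<or> 2 * e + 2 < d" using ev by presburger
  then consider "d \<le> 2 * e" | "2 * e + 2 = d" | "2 * e + 2 < d" by blast
  then show ?thesis
  proof cases
    case 1 then show ?thesis by (simp add: qb_2j_zero[OF o d] e_def)
  next
    case 2
    define w where "w = z^2"
    have w1: "w \<noteq> 1"
    proof
      assume "w = 1"
      then have "d dvd 2" using ordr_pow[OF o, of 2] by (simp add: w_def)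
      then show False using d2 by (auto dest: dvd_imp_le)
    qed
    have "w ^ (j + 1) = z ^ (2 * (j + 1))" unfolding w_def by (rule power_mult[symmetric])
    also have "2 * (j + 1) = (2 * c + 1) * d + 0" using j 2 by (simp add: algebra_simps)
    also have "z ^ \<dots> = 1" using pow_period[OF o, of "2 * c + 1" 0] by simp
    finally have "w ^ (j + 1) = 1" .
    then have "(\<Sum>i<j+1. w^i) = 0" using geometric_sum[OF w1, of "j+1"] by simp
    then show ?thesis by (simp add: w_def)
  next
    case 3
    have "(\<Sum>k\<in>{j..n-1}. z ^ k * qb z k j * qb z (k+1) (j+1)) = (\<Sum>k<n. z ^ k * qb z k j * qb z (k+1) (j+1))"
    proof -
      show ?thesis
        by (rule sum.mono_neutral_left) (use n0 in \<open>auto simp: qb_gt\<close>)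
    qed
    also have "\<dots> = 0"
    proof (rule split_lucas[OF d dn])
      fix a b assume b: "b < d"
      have e1: "e + 1 < d" using 3 by simp
      show "z ^ (a*d + b) * qb z (a*d + b) j * qb z (a*d + b + 1) (j + 1)
          = of_nat (a choose c) ^ 2 * (z ^ b * qb z b e * qb z (b + 1) (e + 1))"
        unfolding j qb_lucas[OF o d b ed] pow_period[OF o] add.assoc[of "c*d" e 1, symmetric]
          qb_lucas1[OF o d b e1]
        by (simp add: power2_eq_square mult_ac)
    next
      show "(\<Sum>b<d. z ^ b * qb z b e * qb z (b + 1) (e + 1)) = 0"
        by (rule local3[OF o d]) (use 3 in simp)
    qed
    finally show ?thesis by simp
  qed
qed

lemma G1:
  assumes o: "ordr z d" and d1: "d > 1" and od: "odd d" and dn: "d dvd n" and wz: "w = z^2"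
  shows "(\<Sum>k<n. ((1+z)^2 * w^k * (\<Sum>i<k+1. w^i) - w^k) * qb w k j ^ 2) * qb w (2 * j) j = 0"
proof -
  have d: "d > 0" using d1 by simp
  have ow: "ordr w d" using ordr_sq[OF o od] wz by simp
  show ?thesis
  proof (cases "d \<le> 2 * (j mod d)")
    case True then show ?thesis by (simp add: qb_2j_zero[OF ow d])
  next
    case False
    define c e where "c = j div d" and "e = j mod d"
    have j: "j = c * d + e" by (simp add: c_def e_def)
    have ed: "e < d" using d by (simp add: e_def)
    have w1: "w \<noteq> 1"
    proof
      assume "w = 1"
      then have "d dvd 1" using ordr_pow[OF ow, of 1] by simp
      then show False using d1 by simp
    qed
    have gs: "(\<Sum>i<a*d+b+1. w^i) = (\<Sum>i<b+1. w^i)" for a b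
    proof -
      have "w ^ (a*d+b+1) = w ^ (b+1)" using pow_period[OF ow, of a "b+1"] by (simp add: add.assoc)
      then show ?thesis unfolding geometric_sum[OF w1] by (simp only:)
    qed
    have "(\<Sum>k<n. ((1+z)^2 * w^k * (\<Sum>i<k+1. w^i) - w^k) * qb w k j ^ 2) = 0"
    proof (rule split_lucas[OF d dn])
      fix a b assume b: "b < d"
      show "((1+z)^2 * w^(a*d+b) * (\<Sum>i<a*d+b+1. w^i) - w^(a*d+b)) * qb w (a*d+b) j ^ 2
          = of_nat (a choose c) ^ 2 * (((1+z)^2 * w^b * (\<Sum>i<b+1. w^i) - w^b) * qb w b e ^ 2)"
        unfolding j qb_lucas[OF ow d b ed] pow_period[OF ow] gs
        by (simp add: power_mult_distrib mult_ac)
    next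
      show "(\<Sum>b<d. ((1+z)^2 * w^b * (\<Sum>i<b+1. w^i) - w^b) * qb w b e ^ 2) = 0"
        by (rule local1[OF o d1 od _ wz]) (use False e_def in simp)
    qed
    then show ?thesis by simp
  qed
qed

lemma prod_reidx:
  fixes f :: "nat \<Rightarrow> 'a::comm_monoid_mult"
  assumes "k \<le> n"
  shows "(\<Prod>i=1..k. f (n - k + i)) = (\<Prod>i<k. f (n - i))"
proof (rule prod.reindex_bij_witness[where i = "\<lambda>i. k - i" and j = "\<lambda>i. k - i"])
  fix a assume "a \<in> {1..k}" then show "k - (k - a) = a" by auto
next
  fix a assume "a \<in> {1..k}" then show "k - a \<in> {..<k}" by auto
next
  fix b assume "b \<in> {..<k}" then show "k - (k - b) = b" by auto
next
  fix b assume "b \<in> {..<k}" then show "k - b \<in> {1..k}" by auto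
next
  fix a assume "a \<in> {1..k}"
  then have "n - (k - a) = n - k + a" using assms by auto
  then show "f (n - (k - a)) = f (n - k + a)" by simp
qed

lemma Q_nz:
  assumes m: "m > 0" and i: "i > 0"
  shows "1 - ([:0, 1:] ^ m) ^ i \<noteq> (0 :: int poly)"
proof
  assume "1 - ([:0, 1:] ^ m) ^ i = (0 :: int poly)"
  then have "poly (1 - ([:0, 1:] ^ m) ^ i :: int poly) 2 = 0" by simp
  then have "(2::int) ^ (m * i) = 1" by (simp add: poly_power power_mult)
  then show False using m i by simp
qed

lemma qbinom_qb:
  assumes nz: "\<And>i. i > 0 \<Longrightarrow> 1 - Q ^ i \<noteq> (0 :: int poly)"
  shows "qbinom Q n k = qb Q n k"
proof (cases "k \<le> n")
  case True
  have D: "(\<Prod>i=1..k. 1 - Q ^ i) \<noteq> 0" using nz by (auto simp: prod_zero_iff)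
  have "(\<Prod>i=1..k. 1 - Q ^ (n - k + i)) = qb Q n k * (\<Prod>i=1..k. 1 - Q ^ i)"
    using prod_reidx[OF True, of "\<lambda>j. 1 - Q ^ j"] qb_prod[OF True, of Q] by simp
  then show ?thesis unfolding qbinom_def using True D by simp
next
  case False
  then show ?thesis by (simp add: qbinom_def qb_gt)
qed

lemma qbinom1: "qbinom [:0, 1:] n k = qb [:0, 1:] n k"
  using qbinom_qb[of "[:0, 1:]" n k] Q_nz[of 1] by simp

lemma qbinom2: "qbinom ([:0, 1:] ^ 2) n k = qb ([:0, 1:] ^ 2) n k"
  using qbinom_qb[of "[:0, 1:] ^ 2" n k] Q_nz[of 2] by simp

lemma qint2: "qint ([:0, 1:] ^ 2) n = (\<Sum>i<n. ([:0, 1:] ^ 2) ^ i)"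
proof -
  have nz: "1 - [:0, 1:] ^ 2 \<noteq> (0 :: int poly)" using Q_nz[of 2 1] by simp
  show ?thesis unfolding qint_def one_diff_power_eq[of "[:0, 1:] ^ 2" n]
    using nz by (rule nonzero_mult_div_cancel_left)
qed

lemma ev_qbinom1: "ev z (qbinom [:0, 1:] n k) = qb z n k"
  by (simp add: qbinom1 qb_ev)
lemma ev_qbinom2: "ev z (qbinom ([:0, 1:] ^ 2) n k) = qb (z ^ 2) n k"
  by (simp add: qbinom2 qb_ev)
lemma ev_qint2: "ev z (qint ([:0, 1:] ^ 2) n) = (\<Sum>i<n. (z ^ 2) ^ i)"
  by (simp add: qint2)

lemma coeff_gsun: "coeff (gsun Q k) j = qbinom Q k j ^ 2 * qbinom Q (2 * j) j"
proof -
  have "coeff (gsun Q k) j = (\<Sum>i=0..k. if i = j then qbinom Q k i ^ 2 * qbinom Q (2 * i) i else 0)"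
    by (simp add: gsun_def coeff_sum coeff_monom)
  also have "\<dots> = (if j \<in> {0..k} then qbinom Q k j ^ 2 * qbinom Q (2 * j) j else 0)"
    by (rule sum.delta) simp
  also have "\<dots> = qbinom Q k j ^ 2 * qbinom Q (2 * j) j"
    by (auto simp: qbinom_def)
  finally show ?thesis .
qed

lemma coeff_msum: "coeff (\<Sum>k\<in>K. monom (f k) 0 * p k) j = (\<Sum>k\<in>K. f k * coeff (p k) j)"
  by (simp add: coeff_sum monom_0)

lemma fin_S: "(n::nat) > 0 \<Longrightarrow> finite {d. d dvd n \<and> P d}"
  by (rule finite_subset[of _ "{..n}"]) (auto intro: dvd_imp_le)

lemma Kset_ordr: "d > 0 \<Longrightarrow> k \<in> Kset d \<Longrightarrow> ordr (prim d k) d"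
  by (rule prim_ordr) (auto simp: Kset_def)

lemma part2:
  fixes n :: nat
  assumes n0: "n > 0"
  shows "congq (\<Sum>k=0..n-1. monom ([:0, 1:]^k) 0 * gsun [:0, 1:] k) 0
           (\<Prod>d\<in>{d. d dvd n \<and> even d}. cyclotomic d)"
  unfolding congq_def
proof
  fix j
  have nset: "{0..n - Suc 0} = {..<n}" using n0 by auto
  show "(\<Prod>d\<in>{d. d dvd n \<and> even d}. cyclotomic d) dvd
        coeff ((\<Sum>k=0..n-1. monom ([:0, 1:]^k) 0 * gsun [:0, 1:] k) - 0) j"
  proof (rule cyclo_dvd)
    show "finite {d. d dvd n \<and> even d}" by (rule fin_S[OF n0])
  next
    fix d assume "d \<in> {d. d dvd n \<and> even d}"
    then show "d > 0" using n0 by (auto intro: Nat.gr0I)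
  next
    fix d k assume dS: "d \<in> {d. d dvd n \<and> even d}" and k: "k \<in> Kset d"
    have d: "d > 0" using dS n0 by (auto intro: Nat.gr0I)
    define z where "z = prim d k"
    have o: "ordr z d" unfolding z_def by (rule Kset_ordr[OF d k])
    have "ev z (coeff ((\<Sum>k=0..n-1. monom ([:0, 1:]^k) 0 * gsun [:0, 1:] k) - 0) j)
        = (\<Sum>t<n. z ^ t * (qb z t j ^ 2 * qb z (2 * j) j))"
      by (simp add: coeff_msum coeff_gsun ev_qbinom1 nset)
    also have "\<dots> = (\<Sum>t<n. z ^ t * qb z t j ^ 2) * qb z (2 * j) j"
      unfolding sum_distrib_right by (simp add: mult_ac)
    also have "\<dots> = 0" using G2[OF o d _ _] dS by auto
    finally show "ev (prim d k) (coeff ((\<Sum>k=0..n-1. monom ([:0, 1:]^k) 0 * gsun [:0, 1:] k) - 0) j) = 0"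
      by (simp add: z_def)
  qed
qed

lemma part1:
  fixes n :: nat
  assumes n0: "n > 0"
  shows "congq
           (\<Sum>k=0..n-1. monom ((1 + [:0, 1:])^2 * [:0, 1:]^(2*k) * qint ([:0, 1:]^2) (k+1)) 0 * gsun ([:0, 1:]^2) k)
           (\<Sum>k=0..n-1. monom ([:0, 1:]^(2*k)) 0 * gsun ([:0, 1:]^2) k)
           (\<Prod>d\<in>{d. d dvd n \<and> d > 1 \<and> odd d}. cyclotomic d)"
  unfolding congq_def
proof
  fix j
  have nset: "{0..n - Suc 0} = {..<n}" using n0 by auto
  let ?A = "(\<Sum>k=0..n-1. monom ((1 + [:0, 1:])^2 * [:0, 1:]^(2*k) * qint ([:0, 1:]^2) (k+1)) 0 * gsun ([:0, 1:]^2) k)"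
  let ?B = "(\<Sum>k=0..n-1. monom ([:0, 1:]^(2*k)) 0 * gsun ([:0, 1:]^2) k) :: int poly poly"
  show "(\<Prod>d\<in>{d. d dvd n \<and> d > 1 \<and> odd d}. cyclotomic d) dvd coeff (?A - ?B) j"
  proof (rule cyclo_dvd)
    show "finite {d. d dvd n \<and> d > 1 \<and> odd d}" by (rule fin_S[OF n0])
  next
    fix d assume "d \<in> {d. d dvd n \<and> d > 1 \<and> odd d}"
    then show "d > 0" by auto
  next
    fix d k assume dS: "d \<in> {d. d dvd n \<and> d > 1 \<and> odd d}" and k: "k \<in> Kset d"
    have d: "d > 0" using dS by auto
    define z where "z = prim d k"
    define w where "w = z ^ 2"
    have o: "ordr z d" unfolding z_def by (rule Kset_ordr[OF d k])
    have zw: "z ^ (2 * t) = w ^ t" for t by (simp add: w_def power_mult)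
    have "ev z (coeff (?A - ?B) j)
        = (\<Sum>t<n. (1 + z)^2 * z^(2*t) * (\<Sum>i<t+1. (z^2)^i) * (qb (z^2) t j ^ 2 * qb (z^2) (2 * j) j))
          - (\<Sum>t<n. z^(2*t) * (qb (z^2) t j ^ 2 * qb (z^2) (2 * j) j))"
      by (simp add: coeff_diff coeff_msum coeff_gsun ev_qbinom2 ev_qint2 nset)
    also have "\<dots> = (\<Sum>t<n. ((1+z)^2 * w^t * (\<Sum>i<t+1. w^i) - w^t) * qb w t j ^ 2) * qb w (2 * j) j"
      unfolding zw w_def[symmetric] sum_subtractf[symmetric] sum_distrib_right
      by (rule sum.cong[OF refl]) algebra
    also have "\<dots> = 0" using G1[OF o _ _ _ w_def] dS by auto
    finally show "ev (prim d k) (coeff (?A - ?B) j) = 0" by (simp add: z_def)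
  qed
qed

lemma part3:
  fixes n :: nat
  assumes n0: "n > 0"
  shows "congq
           (\<Sum>j=0..n-1. monom (qint ([:0, 1:]^2) (j+1) * qbinom [:0, 1:] (2*j) j *
               (\<Sum>k=j..n-1. [:0, 1:]^k * qbinom [:0, 1:] k j * qbinom [:0, 1:] (k+1) (j+1))) j)
           0
           (\<Prod>d\<in>{d. d dvd n \<and> d > 2 \<and> even d}. cyclotomic d)"
  unfolding congq_def
proof
  fix i
  let ?X = "\<lambda>j. qint ([:0, 1:]^2) (j+1) * qbinom [:0, 1:] (2*j) j *
               (\<Sum>k=j..n-1. [:0, 1:]^k * qbinom [:0, 1:] k j * qbinom [:0, 1:] (k+1) (j+1))"
  have c: "coeff ((\<Sum>j=0..n-1. monom (?X j) j) - 0) i = (if i \<in> {0..n-1} then ?X i else 0)"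
    by (simp add: coeff_sum coeff_monom sum.delta)
  show "(\<Prod>d\<in>{d. d dvd n \<and> d > 2 \<and> even d}. cyclotomic d) dvd coeff ((\<Sum>j=0..n-1. monom (?X j) j) - 0) i"
  proof (cases "i \<in> {0..n-1}")
    case False then show ?thesis unfolding c by simp
  next
    case True
    have "(\<Prod>d\<in>{d. d dvd n \<and> d > 2 \<and> even d}. cyclotomic d) dvd ?X i"
    proof (rule cyclo_dvd)
      show "finite {d. d dvd n \<and> d > 2 \<and> even d}" by (rule fin_S[OF n0])
    next
      fix d assume "d \<in> {d. d dvd n \<and> d > 2 \<and> even d}"
      then show "d > 0" by auto
    next
      fix d k assume dS: "d \<in> {d. d dvd n \<and> d > 2 \<and> even d}" and k: "k \<in> Kset d"
      have d: "d > 0" using dS by auto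
      define z where "z = prim d k"
      have o: "ordr z d" unfolding z_def by (rule Kset_ordr[OF d k])
      have "ev z (?X i) = (\<Sum>t<i+1. (z^2)^t) * qb z (2 * i) i *
              (\<Sum>k\<in>{i..n-1}. z ^ k * qb z k i * qb z (k+1) (i+1))"
        by (simp add: ev_qbinom1 ev_qint2)
      also have "\<dots> = 0" using G3[OF o _ _ _ n0] dS by auto
      finally show "ev (prim d k) (?X i) = 0" by (simp add: z_def)
    qed
    then show ?thesis unfolding c using True by simp
  qed
qed

theorem theorem5:
  fixes n :: nat
  assumes "n > 0"
  defines "q \<equiv> [:0, 1:] :: int poly"
  shows "congq
           (\<Sum>k=0..n-1. monom ((1 + q)^2 * q^(2*k) * qint (q^2) (k+1)) 0 * gsun (q^2) k)
           (\<Sum>k=0..n-1. monom (q^(2*k)) 0 * gsun (q^2) k)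
           (\<Prod>d\<in>{d. d dvd n \<and> d > 1 \<and> odd d}. cyclotomic d)
       \<and> congq (\<Sum>k=0..n-1. monom (q^k) 0 * gsun q k) 0
           (\<Prod>d\<in>{d. d dvd n \<and> even d}. cyclotomic d)
       \<and> congq
           (\<Sum>j=0..n-1. monom (qint (q^2) (j+1) * qbinom q (2*j) j *
               (\<Sum>k=j..n-1. q^k * qbinom q k j * qbinom q (k+1) (j+1))) j)
           0
           (\<Prod>d\<in>{d. d dvd n \<and> d > 2 \<and> even d}. cyclotomic d)"
proof -
  show ?thesis
    using part1[OF assms(1)] part2[OF assms(1)] part3[OF assms(1)] unfolding q_def by blast
qed

end
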